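(* Let $n\geq1$, $p$ a prime and $R\subsetneq E_n$. Then every $x\in\mathbb{Z}^n$ satisfying $F^{(i)}_R(x)\le0$ for all $i\in E_n$ and $x_i\geq0$ for all $i\in R$ is a linear combination with non-negative rational coefficients of the vectors $\lambda^{(i)}_k$, $1\le i\le h$, $1\le k\le g_i$.
   Context: $E_n=\{1,\dots,n\}$, indices taken modulo $n$; $e_1,\dots,e_n$ standard basis of $\mathbb{Z}^n$, extended $n$-periodically to $e_m$, $m\in\mathbb{Z}$. $\delta_R^{(i)}=-1$ if $i\in R$, $1$ otherwise; $F^{(d)}_R(x)=\sum_{i=0}^{n-1}p^i\delta_R^{(d+i)}x_{d+i}$. Write $E_n\setminus R=\{r_1,\dots,r_h\}$ ($h=n-|R|\ge1$) so that $r_{i+1}$ is the first element of $E_n\setminus R$ in the cyclic sequence $r_i+1,r_i+2,\dots$ (with $r_{h+1}=r_1$, $r_0=r_h$). Let $g_i$ be the smallest positive integer with $r_{i-1}+g_i\equiv r_i \pmod n$ (so $\sum_i g_i=n$). Define $\lambda^{(i)}_k=e_{r_i}+p^ke_{r_i-k}$ for $1\le k\le g_i-1$ and $\lambda^{(i)}_{g_i}=e_{r_i}-p^{g_i}e_{r_{i-1}}$. *)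

theory Defs
  imports Complex_Main "HOL-Computational_Algebra.Primes"
begin

text \<open>Conventions: E_n = {1..n}; vectors in Z^n are functions nat => int, only their
values at 1..n matter. Indices m :: int are reduced modulo n into {1..n} by red.\<close>

definition red :: "nat \<Rightarrow> int \<Rightarrow> nat" where
  "red n m = nat (((m - 1) mod int n) + 1)"

definition delta :: "nat \<Rightarrow> nat set \<Rightarrow> int \<Rightarrow> int" where
  "delta n R i = (if red n i \<in> R then -1 else 1)"

definition Fform :: "nat \<Rightarrow> nat \<Rightarrow> nat set \<Rightarrow> int \<Rightarrow> (nat \<Rightarrow> int) \<Rightarrow> int" where
  "Fform n p R d x = (\<Sum>i<n. int p ^ i * delta n R (d + int i) * x (red n (d + int i)))"

definition evec :: "nat \<Rightarrow> int \<Rightarrow> nat \<Rightarrow> int" where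
  "evec n m = (\<lambda>j. if red n (int j) = red n m then 1 else 0)"

text \<open>h = n - |R| and enumeration r_1 < ... < r_h of E_n - R (increasing order is a
cyclic enumeration as required), with r_0 = r_h, r_{h+1} = r_1.\<close>
definition hh :: "nat \<Rightarrow> nat set \<Rightarrow> nat" where
  "hh n R = card ({1..n} - R)"

definition rr :: "nat \<Rightarrow> nat set \<Rightarrow> nat \<Rightarrow> nat" where
  "rr n R i = (let h = hh n R; rs = sorted_list_of_set ({1..n} - R) in
     if i = 0 then rs ! (h - 1) else if i = h + 1 then rs ! 0 else rs ! (i - 1))"

definition gg :: "nat \<Rightarrow> nat set \<Rightarrow> nat \<Rightarrow> nat" where
  "gg n R i = (LEAST g. 0 < g \<and> (int (rr n R (i - 1)) + int g) mod int n = int (rr n R i) mod int n)"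

definition lam :: "nat \<Rightarrow> nat \<Rightarrow> nat set \<Rightarrow> nat \<Rightarrow> nat \<Rightarrow> nat \<Rightarrow> int" where
  "lam n p R i k = (\<lambda>j.
     if k < gg n R i
     then evec n (int (rr n R i)) j + int p ^ k * evec n (int (rr n R i) - int k) j
     else evec n (int (rr n R i)) j - int p ^ gg n R i * evec n (int (rr n R (i - 1))) j)"

end

theory Submission
  imports Defs
begin


lemma red_int: "n \<ge> 1 \<Longrightarrow> int (red n m) = (m - 1) mod int n + 1"
  unfolding red_def by simp

lemma red_range: "n \<ge> 1 \<Longrightarrow> red n m \<in> {1..n}"
proof -
  assume n: "n \<ge> 1"
  have "0 \<le> (m - 1) mod int n" "(m - 1) mod int n < int n" using n by auto
  then show ?thesis unfolding red_def by auto
qed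

lemma red_id: "j \<in> {1..n} \<Longrightarrow> red n (int j) = j"
  unfolding red_def by auto

lemma red_eq_iff: "n \<ge> 1 \<Longrightarrow> red n a = red n b \<longleftrightarrow> a mod int n = b mod int n"
proof -
  assume n: "n \<ge> 1"
  have "red n a = red n b \<longleftrightarrow> int (red n a) = int (red n b)" by simp
  also have "\<dots> \<longleftrightarrow> (a - 1) mod int n = (b - 1) mod int n" using n by (simp add: red_int)
  also have "\<dots> \<longleftrightarrow> a mod int n = b mod int n"
    by (simp add: mod_eq_dvd_iff)
  finally show ?thesis .
qed

lemma red_mod: "n \<ge> 1 \<Longrightarrow> int (red n m) mod int n = m mod int n"
proof -
  assume n: "n \<ge> 1"
  have "red n (int (red n m)) = red n m" using red_id red_range n by blast
  then show ?thesis using red_eq_iff n by blast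
qed

definition ff :: "nat \<Rightarrow> nat set \<Rightarrow> (nat \<Rightarrow> int) \<Rightarrow> int \<Rightarrow> int" where
  "ff n R x d = delta n R d * x (red n d)"

lemma ff_periodic: "n \<ge> 1 \<Longrightarrow> ff n R x (d + int n) = ff n R x d"
proof -
  assume n: "n \<ge> 1"
  have "red n (d + int n) = red n d" using n red_eq_iff by simp
  then show ?thesis unfolding ff_def delta_def by simp
qed

lemma Fform_ff: "Fform n p R d x = (\<Sum>i<n. int p ^ i * ff n R x (d + int i))"
  unfolding Fform_def ff_def by (simp add: mult.assoc)

lemma F_rec1:
  assumes n: "n \<ge> 1"
  shows "Fform n p R d x = int p * Fform n p R (d + 1) x + (1 - int p ^ n) * ff n R x d"
proof -
  obtain m where m: "n = Suc m" using n by (cases n) auto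
  let ?f = "ff n R x"
  have "Fform n p R d x = ?f d + (\<Sum>i<m. int p ^ Suc i * ?f (d + 1 + int i))"
    unfolding Fform_ff m sum.lessThan_Suc_shift by (simp add: add_ac)
  also have "(\<Sum>i<m. int p ^ Suc i * ?f (d + 1 + int i)) = int p * (\<Sum>i<m. int p ^ i * ?f (d + 1 + int i))"
    by (simp add: sum_distrib_left mult.assoc)
  finally have 1: "Fform n p R d x = ?f d + int p * (\<Sum>i<m. int p ^ i * ?f (d + 1 + int i))" .
  have "Fform n p R (d + 1) x = (\<Sum>i<m. int p ^ i * ?f (d + 1 + int i)) + int p ^ m * ?f (d + 1 + int m)"
    unfolding Fform_ff m by simp
  moreover have "?f (d + 1 + int m) = ?f d" using ff_periodic[OF n, of R x d] m by (simp add: add_ac)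
  ultimately show ?thesis using 1 m by (simp add: algebra_simps)
qed

lemma F_rec:
  assumes n: "n \<ge> 1"
  shows "Fform n p R d x = int p ^ t * Fform n p R (d + int t) x
     + (1 - int p ^ n) * (\<Sum>s<t. int p ^ s * ff n R x (d + int s))"
proof (induction t)
  case 0 then show ?case by simp
next
  case (Suc t)
  have "Fform n p R (d + int t) x = int p * Fform n p R (d + int t + 1) x + (1 - int p ^ n) * ff n R x (d + int t)"
    using F_rec1[OF n] .
  then have "Fform n p R d x = int p ^ t * (int p * Fform n p R (d + int t + 1) x + (1 - int p ^ n) * ff n R x (d + int t))
     + (1 - int p ^ n) * (\<Sum>s<t. int p ^ s * ff n R x (d + int s))" using Suc by simp
  moreover have "d + int (Suc t) = d + int t + 1" by simp
  ultimately show ?case by (simp add: algebra_simps)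
qed

lemma F_cong:
  assumes n: "n \<ge> 1" and "d mod int n = d' mod int n"
  shows "Fform n p R d x = Fform n p R d' x"
proof -
  have "\<And>i. red n (d + int i) = red n (d' + int i)"
    using assms red_eq_iff[OF n] by (metis mod_add_cong)
  then show ?thesis unfolding Fform_def delta_def by simp
qed

lemma sum_rev_pow:
  fixes f :: "nat \<Rightarrow> rat" and P :: rat
  assumes "P \<noteq> 0"
  shows "(\<Sum>k=1..t. f k / P ^ k) = (\<Sum>s<t. P ^ s * f (t - s)) / P ^ t"
proof (induction t)
  case 0 then show ?case by simp
next
  case (Suc t)
  have "(\<Sum>s<Suc t. P ^ s * f (Suc t - s)) = f (Suc t) + (\<Sum>s<t. P ^ Suc s * f (t - s))"
    unfolding sum.lessThan_Suc_shift by simp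
  also have "\<dots> = f (Suc t) + P * (\<Sum>s<t. P ^ s * f (t - s))"
    by (simp add: sum_distrib_left mult.assoc)
  finally have e: "(\<Sum>s<Suc t. P ^ s * f (Suc t - s)) = f (Suc t) + P * (\<Sum>s<t. P ^ s * f (t - s))" .
  have "(f (Suc t) + P * (\<Sum>s<t. P ^ s * f (t - s))) / P ^ Suc t
      = f (Suc t) / P ^ Suc t + (\<Sum>s<t. P ^ s * f (t - s)) / P ^ t"
    using assms by (simp add: add_divide_distrib)
  then show ?case using Suc.IH e by simp
qed




definition SS :: "nat \<Rightarrow> nat set \<Rightarrow> nat set" where "SS n R = {1..n} - R"
definition LL :: "nat \<Rightarrow> nat set \<Rightarrow> nat list" where "LL n R = sorted_list_of_set (SS n R)"
definition lf :: "nat \<Rightarrow> nat set \<Rightarrow> nat \<Rightarrow> int" where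
  "lf n R i = (if i = 0 then int (rr n R (hh n R)) - int n else int (rr n R i))"

lemma window:
  fixes a b c :: int
  assumes "c - int n < a" "a \<le> c" "c - int n < b" "b \<le> c" "a mod int n = b mod int n"
  shows "a = b"
proof -
  have "int n dvd a - b" using assms(5) by (simp add: mod_eq_dvd_iff)
  then obtain q where q: "a - b = int n * q" by blast
  have "\<bar>a - b\<bar> < int n" using assms by auto
  then have "int n * \<bar>q\<bar> < int n * 1" using q by (simp add: abs_mult)
  moreover have "0 < int n" using assms by auto
  ultimately have "\<bar>q\<bar> < 1" by simp
  then have "q = 0" by simp
  then show ?thesis using q by simp
qed

context
  fixes n :: nat and R :: "nat set"
  assumes n1: "n \<ge> 1" and Rs: "R \<subset> {1..n}"
begin

lemma SS_fin: "finite (SS n R)" unfolding SS_def by simp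
lemma SS_ne: "SS n R \<noteq> {}" using Rs unfolding SS_def by auto
lemma LL_set: "set (LL n R) = SS n R" unfolding LL_def using SS_fin by simp
lemma LL_len: "length (LL n R) = hh n R" unfolding LL_def hh_def SS_def by simp
lemma h1: "hh n R \<ge> 1" using SS_ne SS_fin unfolding hh_def SS_def
  by (simp add: Suc_leI card_gt_0_iff)
lemma LL_sorted: "sorted_wrt (<) (LL n R)" unfolding LL_def by simp
lemma LL_dist: "distinct (LL n R)" unfolding LL_def by simp

lemma LL_less: "a < b \<Longrightarrow> b < hh n R \<Longrightarrow> LL n R ! a < LL n R ! b"
  using LL_sorted LL_len by (simp add: sorted_wrt_iff_nth_less)

lemma rr_nth: "i \<in> {1..hh n R} \<Longrightarrow> rr n R i = LL n R ! (i - 1)"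
  unfolding rr_def LL_def SS_def by (simp add: Let_def)
lemma rr_0: "rr n R 0 = rr n R (hh n R)"
  using h1 unfolding rr_def LL_def by (simp add: Let_def)

lemma rr_SS: "i \<in> {1..hh n R} \<Longrightarrow> rr n R i \<in> SS n R"
proof -
  assume i: "i \<in> {1..hh n R}"
  have "i - 1 < length (LL n R)" using i LL_len by auto
  then have "LL n R ! (i - 1) \<in> set (LL n R)" by (rule nth_mem)
  then show ?thesis using rr_nth[OF i] LL_set by simp
qed

lemma rr_range: "i \<in> {1..hh n R} \<Longrightarrow> rr n R i \<in> {1..n}"
  using rr_SS unfolding SS_def by auto

lemma SS_rr: "j \<in> SS n R \<Longrightarrow> \<exists>m\<in>{1..hh n R}. rr n R m = j"
proof -
  assume "j \<in> SS n R"
  then obtain a where a: "a < hh n R" "LL n R ! a = j" using LL_set LL_len by (metis in_set_conv_nth)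
  then have "Suc a \<in> {1..hh n R}" by auto
  moreover have "rr n R (Suc a) = j" using rr_nth[OF calculation] a by simp
  ultimately show ?thesis by blast
qed

lemma rr_inj: "i \<in> {1..hh n R} \<Longrightarrow> m \<in> {1..hh n R} \<Longrightarrow> rr n R i = rr n R m \<Longrightarrow> i = m"
proof -
  assume i: "i \<in> {1..hh n R}" and m: "m \<in> {1..hh n R}" and e: "rr n R i = rr n R m"
  have "LL n R ! (i - 1) = LL n R ! (m - 1)" using e rr_nth[OF i] rr_nth[OF m] by simp
  moreover have "i - 1 < length (LL n R)" "m - 1 < length (LL n R)" using i m LL_len by auto
  ultimately have "i - 1 = m - 1" using nth_eq_iff_index_eq[OF LL_dist] by blast
  then show ?thesis using i m by auto
qed

lemma lf_pos: "i \<in> {1..hh n R} \<Longrightarrow> lf n R i = int (rr n R i)"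
  unfolding lf_def by simp
lemma lf_range: "i \<in> {1..hh n R} \<Longrightarrow> 1 \<le> lf n R i \<and> lf n R i \<le> int n"
  using rr_range lf_pos by fastforce
lemma lf_0: "lf n R 0 = lf n R (hh n R) - int n"
  using h1 unfolding lf_def by simp

lemma lf_less: "a < b \<Longrightarrow> b \<le> hh n R \<Longrightarrow> lf n R a < lf n R b"
proof -
  assume ab: "a < b" "b \<le> hh n R"
  show ?thesis
  proof (cases "a = 0")
    case True
    then show ?thesis using lf_0 lf_range[of b] lf_range[of "hh n R"] ab h1 by auto
  next
    case False
    then have "LL n R ! (a - 1) < LL n R ! (b - 1)" using ab by (intro LL_less) auto
    then show ?thesis using False ab lf_pos rr_nth by auto
  qed
qed

lemma lf_le: "a \<le> b \<Longrightarrow> b \<le> hh n R \<Longrightarrow> lf n R a \<le> lf n R b"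
  using lf_less by (metis le_less)

lemma lf_window: "i \<in> {1..hh n R} \<Longrightarrow> lf n R (hh n R) - int n < lf n R i \<and> lf n R i \<le> lf n R (hh n R)"
  using lf_range[of i] lf_range[of "hh n R"] h1 lf_le[of i "hh n R"] by auto

lemma red_lf: "i \<in> {0..hh n R} \<Longrightarrow> red n (lf n R i) = rr n R i"
proof -
  assume i: "i \<in> {0..hh n R}"
  show ?thesis
  proof (cases "i = 0")
    case True
    have "red n (lf n R 0) = red n (lf n R (hh n R))"
      using lf_0 red_eq_iff[OF n1] by simp
    also have "\<dots> = rr n R (hh n R)" using lf_pos h1 red_id rr_range by simp
    finally show ?thesis using True rr_0 by simp
  next
    case False
    then show ?thesis using i lf_pos red_id rr_range by simp
  qed
qed

lemma gg_eq: "i \<in> {1..hh n R} \<Longrightarrow> int (gg n R i) = lf n R i - lf n R (i - 1)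
   \<and> 1 \<le> lf n R i - lf n R (i - 1) \<and> lf n R i - lf n R (i - 1) \<le> int n"
proof -
  assume i: "i \<in> {1..hh n R}"
  define G where "G = lf n R i - lf n R (i - 1)"
  have G1: "1 \<le> G" using lf_less[of "i - 1" i] i unfolding G_def by auto
  have Gn: "G \<le> int n"
  proof (cases "i = 1")
    case True
    then show ?thesis using lf_0 lf_le[of 1 "hh n R"] h1 unfolding G_def by auto
  next
    case False
    then have "i - 1 \<in> {1..hh n R}" using i by auto
    then show ?thesis using lf_range[of i] lf_range[of "i - 1"] i unfolding G_def by auto
  qed
  have r: "red n (lf n R (i - 1)) = rr n R (i - 1)" using red_lf[of "i - 1"] i by auto
  have m1: "int (rr n R (i - 1)) mod int n = lf n R (i - 1) mod int n"
    using red_mod[OF n1, of "lf n R (i - 1)"] r by simp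
  have m2: "int (rr n R i) = lf n R i" using lf_pos i by simp
  have P: "\<And>g. (int (rr n R (i - 1)) + int g) mod int n = int (rr n R i) mod int n
      \<longleftrightarrow> (lf n R (i - 1) + int g) mod int n = lf n R i mod int n"
    using m1 m2 by (metis mod_add_left_eq)
  have "gg n R i = nat G"
    unfolding gg_def
  proof (rule Least_equality)
    show "0 < nat G \<and> (int (rr n R (i - 1)) + int (nat G)) mod int n = int (rr n R i) mod int n"
    proof
      show "0 < nat G" using G1 by simp
      have "int (nat G) = G" using G1 by simp
      then show "(int (rr n R (i - 1)) + int (nat G)) mod int n = int (rr n R i) mod int n"
        using P[of "nat G"] unfolding G_def by simp
    qed
  next
    fix g assume g: "0 < g \<and> (int (rr n R (i - 1)) + int g) mod int n = int (rr n R i) mod int n"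
    show "nat G \<le> g"
    proof (rule ccontr)
      assume "\<not> nat G \<le> g"
      then have lt: "int g < G" by simp
      have "(lf n R (i - 1) + int g) mod int n = (lf n R (i - 1) + G) mod int n"
        using g P unfolding G_def by simp
      then have "int n dvd int g - G" by (simp add: mod_eq_dvd_iff)
      then have "int n dvd G - int g" by (metis dvd_diff_commute)
      moreover have "0 < G - int g" "G - int g < int n" using lt g Gn by auto
      ultimately show False using zdvd_imp_le by fastforce
    qed
  qed
  then show ?thesis using G1 Gn unfolding G_def by simp
qed

lemma interior_R:
  assumes i: "i \<in> {1..hh n R}" and t: "lf n R (i - 1) < t" "t < lf n R i"
  shows "red n t \<in> R"
proof -
  have rt: "red n t \<in> {1..n}" using red_range n1 by simp
  have tw: "lf n R (hh n R) - int n < t \<and> t \<le> lf n R (hh n R)"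
  proof -
    have "lf n R 0 \<le> lf n R (i - 1)" using lf_le[of 0 "i - 1"] i by auto
    then show ?thesis using lf_le[of i "hh n R"] lf_0 t i by auto
  qed
  have "red n t \<notin> SS n R"
  proof
    assume "red n t \<in> SS n R"
    then obtain m where m: "m \<in> {1..hh n R}" "rr n R m = red n t" using SS_rr by blast
    have "red n (lf n R m) = red n t" using m red_lf by simp
    then have "lf n R m mod int n = t mod int n" using red_eq_iff n1 by simp
    then have "lf n R m = t" using window[of "lf n R (hh n R)" n "lf n R m" t] lf_window[OF m(1)] tw by simp
    moreover have "m \<ge> i \<or> m \<le> i - 1" by auto
    moreover have "m \<ge> i \<Longrightarrow> lf n R i \<le> lf n R m" using lf_le[of i m] m by auto
    moreover have "m \<le> i - 1 \<Longrightarrow> lf n R m \<le> lf n R (i - 1)" using lf_le[of m "i - 1"] i by auto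
    ultimately show False using t by auto
  qed
  then show ?thesis using rt unfolding SS_def by auto
qed

lemma cover: "m \<le> hh n R \<Longrightarrow> lf n R 0 < t \<Longrightarrow> t \<le> lf n R m \<Longrightarrow>
   \<exists>i\<in>{1..m}. lf n R (i - 1) < t \<and> t \<le> lf n R i"
proof (induction m)
  case 0 then show ?case by simp
next
  case (Suc m)
  show ?case
  proof (cases "t \<le> lf n R m")
    case True then show ?thesis using Suc by force
  next
    case False then show ?thesis using Suc by force
  qed
qed

lemma exist_R:
  assumes j: "j \<in> R"
  shows "\<exists>i\<in>{1..hh n R}. \<exists>k. 1 \<le> k \<and> k < gg n R i \<and> red n (lf n R i - int k) = j"
proof -
  have j1: "j \<in> {1..n}" "j \<notin> SS n R" using j Rs unfolding SS_def by auto
  define t where "t = (if int j \<le> lf n R (hh n R) then int j else int j - int n)"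
  have "red n (int j - int n) = red n (int j)" using red_eq_iff[OF n1] by simp
  then have rt: "red n t = j" unfolding t_def using red_id j1 by auto
  have tw: "lf n R 0 < t" "t \<le> lf n R (hh n R)"
    unfolding t_def using lf_0 lf_range[of "hh n R"] h1 j1 by auto
  obtain i where i: "i \<in> {1..hh n R}" "lf n R (i - 1) < t" "t \<le> lf n R i"
    using cover[OF order.refl tw] by auto
  have "t \<noteq> lf n R i" using red_lf[of i] i rt rr_SS[OF i(1)] j1 by auto
  then have ti: "t < lf n R i" using i by simp
  define k where "k = nat (lf n R i - t)"
  have "1 \<le> k" "int k = lf n R i - t" using ti unfolding k_def by auto
  moreover have "k < gg n R i" using gg_eq[OF i(1)] i(2) calculation by linarith
  moreover have "red n (lf n R i - int k) = j" using rt calculation by simp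
  ultimately show ?thesis using i(1) by blast
qed

lemma uniq_pos:
  assumes i: "i \<in> {1..hh n R}" and i': "i' \<in> {1..hh n R}"
    and k: "k < gg n R i" and k': "k' < gg n R i'"
    and e: "red n (lf n R i - int k) = red n (lf n R i' - int k')"
  shows "i = i' \<and> k = k'"
proof -
  have a: "lf n R (i - 1) < lf n R i - int k" "lf n R i - int k \<le> lf n R i" using gg_eq[OF i] k by auto
  have b: "lf n R (i' - 1) < lf n R i' - int k'" "lf n R i' - int k' \<le> lf n R i'" using gg_eq[OF i'] k' by auto
  have wa: "lf n R (hh n R) - int n < lf n R i - int k \<and> lf n R i - int k \<le> lf n R (hh n R)"
  proof -
    have "lf n R 0 \<le> lf n R (i - 1)" using lf_le[of 0 "i - 1"] i by auto
    then show ?thesis using lf_le[of i "hh n R"] lf_0 a i by auto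
  qed
  have wb: "lf n R (hh n R) - int n < lf n R i' - int k' \<and> lf n R i' - int k' \<le> lf n R (hh n R)"
  proof -
    have "lf n R 0 \<le> lf n R (i' - 1)" using lf_le[of 0 "i' - 1"] i' by auto
    then show ?thesis using lf_le[of i' "hh n R"] lf_0 b i' by auto
  qed
  have eq: "lf n R i - int k = lf n R i' - int k'"
    using window[of "lf n R (hh n R)" n] wa wb e red_eq_iff[OF n1] by blast
  have "i = i'"
  proof (rule ccontr)
    assume "i \<noteq> i'"
    then have "i < i' \<or> i' < i" by auto
    then show False
    proof
      assume "i < i'"
      then have "lf n R i \<le> lf n R (i' - 1)" using lf_le i' by auto
      then show False using a b eq by auto
    next
      assume "i' < i"
      then have "lf n R i' \<le> lf n R (i - 1)" using lf_le i by auto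
      then show False using a b eq by auto
    qed
  qed
  then show ?thesis using eq by simp
qed

lemma pred_idx:
  assumes m: "m \<in> {1..hh n R}"
  shows "\<exists>i\<in>{1..hh n R}. rr n R (i - 1) = rr n R m \<and>
           (\<forall>i'\<in>{1..hh n R}. rr n R (i' - 1) = rr n R m \<longrightarrow> i' = i)"
proof -
  have key: "\<And>i. i \<in> {1..hh n R} \<Longrightarrow> rr n R (i - 1) = rr n R (if i = 1 then hh n R else i - 1)
      \<and> (if i = 1 then hh n R else i - 1) \<in> {1..hh n R}"
  proof -
    fix i assume i: "i \<in> {1..hh n R}"
    show "?thesis i"
    proof (cases "i = 1")
      case True then show ?thesis using rr_0 h1 by simp
    next
      case False then show ?thesis using i by auto
    qed
  qed
  define i0 where "i0 = (if m = hh n R then 1 else m + 1)"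
  have i0: "i0 \<in> {1..hh n R}" using m h1 unfolding i0_def by auto
  have "rr n R (i0 - 1) = rr n R m" unfolding i0_def using rr_0 by auto
  moreover have "\<forall>i'\<in>{1..hh n R}. rr n R (i' - 1) = rr n R m \<longrightarrow> i' = i0"
  proof (intro ballI impI)
    fix i' assume i': "i' \<in> {1..hh n R}" "rr n R (i' - 1) = rr n R m"
    have "rr n R (if i' = 1 then hh n R else i' - 1) = rr n R m" using key[OF i'(1)] i'(2) by simp
    then have "(if i' = 1 then hh n R else i' - 1) = m" using key[OF i'(1)] rr_inj m by blast
    then show "i' = i0" unfolding i0_def using i'(1) m by (cases "i' = 1") auto
  qed
  ultimately show ?thesis using i0 by blast
qed

end



definition cc :: "nat \<Rightarrow> nat \<Rightarrow> nat set \<Rightarrow> (nat \<Rightarrow> int) \<Rightarrow> nat \<Rightarrow> nat \<Rightarrow> rat" where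
  "cc n p R x i k = (if k < gg n R i then rat_of_int (x (red n (lf n R i - int k))) / of_nat p ^ k
     else - rat_of_int (Fform n p R (lf n R (i - 1) + 1) x) / (of_nat p ^ (gg n R i - 1) * (of_nat p ^ n - 1)))"

context
  fixes n p :: nat and R :: "nat set" and x :: "nat \<Rightarrow> int"
  assumes n1: "n \<ge> 1" and pr: "prime p" and Rs: "R \<subset> {1..n}"
    and Fneg: "\<forall>i\<in>{1..n}. Fform n p R (int i) x \<le> 0"
    and xpos: "\<forall>i\<in>R. x i \<ge> 0"
begin

lemma p2: "(of_nat p :: rat) \<ge> 2" using pr prime_ge_2_nat by (metis of_nat_le_iff of_nat_numeral)
lemma Ppos: "(of_nat p :: rat) > 0" using p2 by simp
lemma Qpos: "(of_nat p :: rat) ^ n - 1 > 0"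
proof -
  have "(of_nat p :: rat) ^ 1 \<le> of_nat p ^ n" using p2 n1 by (intro power_increasing) auto
  then have "(of_nat p :: rat) \<le> of_nat p ^ n" by (simp only: power_one_right)
  then show ?thesis using p2 by linarith
qed

lemma gg_pos: "i \<in> {1..hh n R} \<Longrightarrow> gg n R i \<ge> 1"
  using gg_eq[OF n1 Rs] by fastforce

lemma lam_val:
  assumes j: "j \<in> {1..n}" and i: "i \<in> {1..hh n R}"
  shows "rat_of_int (lam n p R i k j) = (if k < gg n R i
      then (if j = rr n R i then 1 else 0) + of_nat p ^ k * (if j = red n (lf n R i - int k) then 1 else 0)
      else (if j = rr n R i then 1 else 0) - of_nat p ^ gg n R i * (if j = rr n R (i - 1) then 1 else 0))"
proof -
  have a: "red n (int j) = j" using red_id j by simp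
  have b: "red n (int (rr n R i)) = rr n R i" using red_id rr_range[OF n1 Rs i] by simp
  have c0: "rr n R (i - 1) \<in> {1..n}"
  proof (cases "i = 1")
    case True then show ?thesis using rr_range[OF n1 Rs] rr_0[OF n1 Rs] h1[OF n1 Rs] by simp
  next
    case False then have "i - 1 \<in> {1..hh n R}" using i by auto
    then show ?thesis using rr_range[OF n1 Rs] by blast
  qed
  have c: "red n (int (rr n R (i - 1))) = rr n R (i - 1)" using red_id c0 by simp
  have d: "int (rr n R i) = lf n R i" using lf_pos[OF n1 Rs i] by simp
  have b': "red n (lf n R i) = rr n R i" using b d by simp
  show ?thesis unfolding lam_def evec_def d unfolding a b' c by auto
qed

lemma K1:
  assumes i: "i \<in> {1..hh n R}"
  shows "(\<Sum>k=1..gg n R i - 1. cc n p R x i k) + cc n p R x i (gg n R i)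
     = - rat_of_int (Fform n p R (lf n R i) x) / (of_nat p ^ n - 1)"
proof -
  define g where "g = gg n R i"
  define t where "t = g - 1"
  define d where "d = lf n R (i - 1) + 1"
  define P where "P = (of_nat p :: rat)"
  define Q where "Q = P ^ n - 1"
  have ge: "int g = lf n R i - lf n R (i - 1)" using gg_eq[OF n1 Rs i] unfolding g_def by simp
  have g1: "g \<ge> 1" using gg_pos[OF i] unfolding g_def .
  have dt: "d + int t = lf n R i" unfolding d_def t_def using ge g1 by simp
  define V where "V = (\<Sum>s<t. P ^ s * rat_of_int (x (red n (d + int s))))"
  have W: "(\<Sum>k=1..t. cc n p R x i k) = V / P ^ t"
  proof -
    have "(\<Sum>k=1..t. cc n p R x i k) = (\<Sum>k=1..t. rat_of_int (x (red n (lf n R i - int k))) / P ^ k)"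
      by (rule sum.cong) (auto simp: cc_def t_def g_def P_def)
    also have "\<dots> = (\<Sum>s<t. P ^ s * rat_of_int (x (red n (lf n R i - int (t - s))))) / P ^ t"
      using sum_rev_pow[of P "\<lambda>k. rat_of_int (x (red n (lf n R i - int k)))" t] Ppos unfolding P_def by simp
    also have "(\<Sum>s<t. P ^ s * rat_of_int (x (red n (lf n R i - int (t - s))))) = V"
      unfolding V_def by (rule sum.cong) (auto simp: of_nat_diff dt[symmetric])
    finally show ?thesis .
  qed
  have ffv: "\<And>s. s < t \<Longrightarrow> ff n R x (d + int s) = - x (red n (d + int s))"
  proof -
    fix s assume s: "s < t"
    have "red n (d + int s) \<in> R"
      by (rule interior_R[OF n1 Rs i]) (use s dt d_def in auto)
    then show "ff n R x (d + int s) = - x (red n (d + int s))" unfolding ff_def delta_def by simp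
  qed
  have Fi: "Fform n p R d x = int p ^ t * Fform n p R (lf n R i) x
      + (1 - int p ^ n) * (\<Sum>s<t. int p ^ s * ff n R x (d + int s))"
    using F_rec[OF n1, of p R d x t] dt by simp
  also have "(\<Sum>s<t. int p ^ s * ff n R x (d + int s)) = - (\<Sum>s<t. int p ^ s * x (red n (d + int s)))"
    by (simp add: ffv sum_negf[symmetric])
  finally have Fi1: "Fform n p R d x = int p ^ t * Fform n p R (lf n R i) x
      + (int p ^ n - 1) * (\<Sum>s<t. int p ^ s * x (red n (d + int s)))" by (simp add: algebra_simps)
  have "rat_of_int (Fform n p R d x) = rat_of_int (int p ^ t * Fform n p R (lf n R i) x
      + (int p ^ n - 1) * (\<Sum>s<t. int p ^ s * x (red n (d + int s))))"
    using Fi1 by (rule arg_cong)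
  then have Fi2: "rat_of_int (Fform n p R d x) = P ^ t * rat_of_int (Fform n p R (lf n R i) x) + Q * V"
    unfolding P_def Q_def V_def by (simp add: of_int_sum)
  have a: "cc n p R x i g = - rat_of_int (Fform n p R d x) / (P ^ t * Q)"
    unfolding cc_def g_def t_def d_def P_def Q_def by simp
  have Pt: "P ^ t > 0" using Ppos unfolding P_def by simp
  have Qp: "Q > 0" using Qpos unfolding Q_def P_def by simp
  define F where "F = rat_of_int (Fform n p R (lf n R i) x)"
  have e: "(P ^ t * F + Q * V) / (P ^ t * Q) = F / Q + V / P ^ t"
  proof -
    have "P \<noteq> 0" using Ppos unfolding P_def by simp
    moreover have "Q \<noteq> 0" using Qp by simp
    ultimately show ?thesis by (simp add: field_simps)
  qed
  have "(\<Sum>k=1..t. cc n p R x i k) + cc n p R x i g = - F / Q"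
    unfolding W a Fi2 F_def[symmetric] minus_divide_left[symmetric] e by simp
  then show ?thesis unfolding g_def t_def F_def Q_def P_def .

qed

lemma K2:
  assumes i: "i \<in> {1..hh n R}"
  shows "cc n p R x i (gg n R i) * of_nat p ^ gg n R i
     = - of_nat p * rat_of_int (Fform n p R (lf n R (i - 1) + 1) x) / (of_nat p ^ n - 1)"
proof -
  obtain t where t: "gg n R i = Suc t" using gg_pos[OF i] by (cases "gg n R i") auto
  show ?thesis unfolding cc_def t using Ppos Qpos by (simp add: field_simps)
qed

lemma rr_pred_SS: "i \<in> {1..hh n R} \<Longrightarrow> rr n R (i - 1) \<in> SS n R"
proof -
  assume i: "i \<in> {1..hh n R}"
  show ?thesis
  proof (cases "i = 1")
    case True then show ?thesis using rr_SS[OF n1 Rs] rr_0[OF n1 Rs] h1[OF n1 Rs] by simp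
  next
    case False then have "i - 1 \<in> {1..hh n R}" using i by auto
    then show ?thesis using rr_SS[OF n1 Rs] by blast
  qed
qed

lemma K3:
  assumes i: "i \<in> {1..hh n R}"
  shows "rat_of_int (Fform n p R (lf n R (i - 1)) x) = of_nat p * rat_of_int (Fform n p R (lf n R (i - 1) + 1) x)
      + (1 - of_nat p ^ n) * rat_of_int (x (rr n R (i - 1)))"
proof -
  have r: "red n (lf n R (i - 1)) = rr n R (i - 1)" using red_lf[OF n1 Rs, of "i - 1"] i by auto
  have "rr n R (i - 1) \<notin> R" using rr_pred_SS[OF i] unfolding SS_def by auto
  then have "ff n R x (lf n R (i - 1)) = x (rr n R (i - 1))" unfolding ff_def delta_def r by simp
  then show ?thesis using F_rec1[OF n1, of p R "lf n R (i - 1)" x] by simp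
qed

lemma cc_nonneg:
  assumes i: "i \<in> {1..hh n R}" and k: "k \<in> {1..gg n R i}"
  shows "cc n p R x i k \<ge> 0"
proof (cases "k < gg n R i")
  case True
  have "red n (lf n R i - int k) \<in> R"
    by (rule interior_R[OF n1 Rs i]) (use True k gg_eq[OF n1 Rs i] in auto)
  then show ?thesis using xpos True Ppos unfolding cc_def by simp
next
  case False
  define d where "d = lf n R (i - 1) + 1"
  have "red n d \<in> {1..n}" using red_range n1 by simp
  then have "Fform n p R (int (red n d)) x \<le> 0" using Fneg by blast
  moreover have "Fform n p R (int (red n d)) x = Fform n p R d x"
    by (rule F_cong[OF n1]) (use red_mod[OF n1] in simp)
  ultimately have "Fform n p R d x \<le> 0" by simp
  then show ?thesis using False Ppos Qpos unfolding cc_def d_def[symmetric]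
    by (simp add: divide_nonpos_pos)
qed

end



context
  fixes n p :: nat and R :: "nat set" and x :: "nat \<Rightarrow> int"
  assumes n1: "n \<ge> 1" and pr: "prime p" and Rs: "R \<subset> {1..n}"
    and Fneg: "\<forall>i\<in>{1..n}. Fform n p R (int i) x \<le> 0"
    and xpos: "\<forall>i\<in>R. x i \<ge> 0"
begin

lemma split_i:
  assumes j: "j \<in> {1..n}" and i: "i \<in> {1..hh n R}"
  shows "(\<Sum>k=1..gg n R i. cc n p R x i k * rat_of_int (lam n p R i k j))
    = ((\<Sum>k=1..gg n R i - 1. cc n p R x i k) + cc n p R x i (gg n R i)) * (if j = rr n R i then 1 else 0)
      + (\<Sum>k=1..gg n R i - 1. rat_of_int (x (red n (lf n R i - int k))) * (if j = red n (lf n R i - int k) then 1 else 0))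
      - cc n p R x i (gg n R i) * of_nat p ^ gg n R i * (if j = rr n R (i - 1) then 1 else 0)"
proof -
  let ?g = "gg n R i"
  let ?f = "\<lambda>k. cc n p R x i k * rat_of_int (lam n p R i k j)"
  obtain t where t: "?g = Suc t" using gg_pos[OF n1 pr Rs Fneg xpos i] by (cases ?g) auto
  have sp: "(\<Sum>k=1..?g. ?f k) = (\<Sum>k=1..?g - 1. ?f k) + ?f ?g"
    unfolding t by (simp add: sum.cl_ivl_Suc)
  have Ppos: "(of_nat p :: rat) > 0" using Ppos[OF n1 pr Rs Fneg xpos] .
  have inner: "\<And>k. k \<in> {1..?g - 1} \<Longrightarrow> ?f k = cc n p R x i k * (if j = rr n R i then 1 else 0)
      + rat_of_int (x (red n (lf n R i - int k))) * (if j = red n (lf n R i - int k) then 1 else 0)"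
  proof -
    fix k assume k: "k \<in> {1..?g - 1}"
    then have kl: "k < ?g" by auto
    have "cc n p R x i k * of_nat p ^ k = rat_of_int (x (red n (lf n R i - int k)))"
      unfolding cc_def using kl Ppos by simp
    then show "?f k = cc n p R x i k * (if j = rr n R i then 1 else 0)
      + rat_of_int (x (red n (lf n R i - int k))) * (if j = red n (lf n R i - int k) then 1 else 0)"
      unfolding lam_val[OF n1 pr Rs Fneg xpos j i] using kl by (simp add: algebra_simps)
  qed
  have "(\<Sum>k=1..?g - 1. ?f k) = (\<Sum>k=1..?g - 1. cc n p R x i k) * (if j = rr n R i then 1 else 0)
      + (\<Sum>k=1..?g - 1. rat_of_int (x (red n (lf n R i - int k))) * (if j = red n (lf n R i - int k) then 1 else 0))"
    by (simp add: inner sum.distrib sum_distrib_right)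
  moreover have "?f ?g = cc n p R x i ?g * ((if j = rr n R i then 1 else 0) - of_nat p ^ ?g * (if j = rr n R (i - 1) then 1 else 0))"
    unfolding lam_val[OF n1 pr Rs Fneg xpos j i] by simp
  ultimately show ?thesis using sp by (simp add: algebra_simps)
qed

lemma main_eq:
  assumes j: "j \<in> {1..n}"
  shows "rat_of_int (x j) = (\<Sum>i=1..hh n R. \<Sum>k=1..gg n R i. cc n p R x i k * rat_of_int (lam n p R i k j))"
proof -
  define X where "X i = (\<Sum>k=1..gg n R i - 1. cc n p R x i k) + cc n p R x i (gg n R i)" for i
  define B where "B i = (\<Sum>k=1..gg n R i - 1. rat_of_int (x (red n (lf n R i - int k))) * (if j = red n (lf n R i - int k) then 1 else 0))" for i
  define Y where "Y i = cc n p R x i (gg n R i) * of_nat p ^ gg n R i" for i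
  define H where "H = hh n R"
  have "(\<Sum>i=1..H. \<Sum>k=1..gg n R i. cc n p R x i k * rat_of_int (lam n p R i k j))
      = (\<Sum>i=1..H. X i * (if j = rr n R i then 1 else 0) + B i - Y i * (if j = rr n R (i - 1) then 1 else 0))"
  proof (rule sum.cong)
    fix i assume i: "i \<in> {1..H}"
    then have i': "i \<in> {1..hh n R}" using H_def by simp
    show "(\<Sum>k=1..gg n R i. cc n p R x i k * rat_of_int (lam n p R i k j))
      = X i * (if j = rr n R i then 1 else 0) + B i - Y i * (if j = rr n R (i - 1) then 1 else 0)"
      unfolding X_def B_def Y_def by (rule split_i[OF j i'])
  qed simp
  also have "\<dots> = (\<Sum>i=1..H. X i * (if j = rr n R i then 1 else 0)) + (\<Sum>i=1..H. B i)
      - (\<Sum>i=1..H. Y i * (if j = rr n R (i - 1) then 1 else 0))"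
    by (simp add: sum.distrib sum_subtractf)
  finally have tot: "(\<Sum>i=1..H. \<Sum>k=1..gg n R i. cc n p R x i k * rat_of_int (lam n p R i k j))
      = (\<Sum>i=1..H. X i * (if j = rr n R i then 1 else 0)) + (\<Sum>i=1..H. B i)
      - (\<Sum>i=1..H. Y i * (if j = rr n R (i - 1) then 1 else 0))" .
  show ?thesis
  proof (cases "j \<in> R")
    case True
    have jS: "j \<notin> SS n R" using True unfolding SS_def by auto
    have z1: "(\<Sum>i=1..H. X i * (if j = rr n R i then 1 else 0)) = 0"
      by (rule sum.neutral) (use rr_SS[OF n1 Rs] jS H_def in auto)
    have z2: "(\<Sum>i=1..H. Y i * (if j = rr n R (i - 1) then 1 else 0)) = 0"
      by (rule sum.neutral) (use rr_pred_SS[OF n1 pr Rs Fneg xpos] jS H_def in auto)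
    obtain i0 k0 where i0: "i0 \<in> {1..H}" and k0: "1 \<le> k0" "k0 < gg n R i0" "red n (lf n R i0 - int k0) = j"
      using exist_R[OF n1 Rs True] H_def by blast
    have Bi: "B i = (if i = i0 then rat_of_int (x j) else 0)" if i: "i \<in> {1..H}" for i
    proof -
      have "B i = (\<Sum>k=1..gg n R i - 1. if i = i0 \<and> k = k0 then rat_of_int (x j) else 0)"
        unfolding B_def
      proof (rule sum.cong)
        fix k assume k: "k \<in> {1..gg n R i - 1}"
        have "j = red n (lf n R i - int k) \<longleftrightarrow> i = i0 \<and> k = k0"
        proof
          assume "j = red n (lf n R i - int k)"
          then show "i = i0 \<and> k = k0"
            using uniq_pos[OF n1 Rs, of i i0 k k0] i i0 k k0 H_def by auto
        next
          assume "i = i0 \<and> k = k0" then show "j = red n (lf n R i - int k)" using k0 by simp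
        qed
        then show "rat_of_int (x (red n (lf n R i - int k))) * (if j = red n (lf n R i - int k) then 1 else 0)
             = (if i = i0 \<and> k = k0 then rat_of_int (x j) else 0)" using k0 by auto
      qed simp
      also have "\<dots> = (if i = i0 then rat_of_int (x j) else 0)"
        using k0 by (cases "i = i0") auto
      finally show ?thesis .
    qed
    have "(\<Sum>i=1..H. B i) = (\<Sum>i=1..H. if i = i0 then rat_of_int (x j) else 0)"
      by (rule sum.cong) (simp_all add: Bi)
    also have "\<dots> = rat_of_int (x j)" using i0 by simp
    finally have "(\<Sum>i=1..H. B i) = rat_of_int (x j)" .
    then show ?thesis using tot z1 z2 H_def by simp
  next
    case False
    then have jS: "j \<in> SS n R" using j unfolding SS_def by auto
    obtain m where m: "m \<in> {1..H}" "rr n R m = j" using SS_rr[OF n1 Rs jS] H_def by blast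
    obtain m' where m': "m' \<in> {1..H}" "rr n R (m' - 1) = rr n R m"
      and m'u: "\<forall>i'\<in>{1..H}. rr n R (i' - 1) = rr n R m \<longrightarrow> i' = m'"
      using pred_idx[OF n1 Rs, of m] m H_def by blast
    have zB: "(\<Sum>i=1..H. B i) = 0"
    proof (rule sum.neutral, rule ballI)
      fix i assume i: "i \<in> {1..H}"
      show "B i = 0" unfolding B_def
      proof (rule sum.neutral, rule ballI)
        fix k assume k: "k \<in> {1..gg n R i - 1}"
        have i': "i \<in> {1..hh n R}" using i H_def by simp
        have ge: "int (gg n R i) = lf n R i - lf n R (i - 1)" using gg_eq[OF n1 Rs i'] by simp
        have k1: "1 \<le> int k" "int k < int (gg n R i)" using k by auto
        have "red n (lf n R i - int k) \<in> R"
          by (rule interior_R[OF n1 Rs i']) (use ge k1 in linarith)+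
        then show "rat_of_int (x (red n (lf n R i - int k))) * (if j = red n (lf n R i - int k) then 1 else 0) = 0"
          using False by auto
      qed
    qed
    have sX: "(\<Sum>i=1..H. X i * (if j = rr n R i then 1 else 0)) = X m"
    proof -
      have "(\<Sum>i=1..H. X i * (if j = rr n R i then 1 else 0)) = (\<Sum>i=1..H. if i = m then X i else 0)"
      proof (rule sum.cong)
        fix i assume i: "i \<in> {1..H}"
        have "j = rr n R i \<longleftrightarrow> i = m"
        proof
          assume "j = rr n R i"
          then have "rr n R i = rr n R m" using m(2) by simp
          then show "i = m" using rr_inj[OF n1 Rs, of i m] i m(1) H_def by simp
        next
          assume "i = m" then show "j = rr n R i" using m(2) by simp
        qed
        then show "X i * (if j = rr n R i then 1 else 0) = (if i = m then X i else 0)" by simp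
      qed simp
      then show ?thesis using m by simp
    qed
    have sY: "(\<Sum>i=1..H. Y i * (if j = rr n R (i - 1) then 1 else 0)) = Y m'"
    proof -
      have "(\<Sum>i=1..H. Y i * (if j = rr n R (i - 1) then 1 else 0)) = (\<Sum>i=1..H. if i = m' then Y i else 0)"
      proof (rule sum.cong)
        fix i assume i: "i \<in> {1..H}"
        have "j = rr n R (i - 1) \<longleftrightarrow> i = m'"
        proof
          assume "j = rr n R (i - 1)"
          then have "rr n R (i - 1) = rr n R m" using m(2) by simp
          then show "i = m'" using m'u i by blast
        next
          assume "i = m'" then show "j = rr n R (i - 1)" using m(2) m'(2) by simp
        qed
        then show "Y i * (if j = rr n R (i - 1) then 1 else 0) = (if i = m' then Y i else 0)" by simp
      qed simp
      then show ?thesis using m' by simp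
    qed
    define Q where "Q = (of_nat p :: rat) ^ n - 1"
    define F' where "F' = rat_of_int (Fform n p R (lf n R (m' - 1) + 1) x)"
    have Xm: "X m = - rat_of_int (Fform n p R (lf n R m) x) / Q"
      unfolding X_def Q_def using K1[OF n1 pr Rs Fneg xpos, of m] m H_def by simp
    have Ym: "Y m' = - of_nat p * F' / Q"
      unfolding Y_def Q_def F'_def using K2[OF n1 pr Rs Fneg xpos, of m'] m' H_def by simp
    have K3m: "rat_of_int (Fform n p R (lf n R (m' - 1)) x) = of_nat p * F' + (1 - of_nat p ^ n) * rat_of_int (x j)"
      using K3[OF n1 pr Rs Fneg xpos, of m'] m' m H_def unfolding F'_def by simp
    have "red n (lf n R m) = red n (lf n R (m' - 1))"
      using red_lf[OF n1 Rs, of m] red_lf[OF n1 Rs, of "m' - 1"] m m' H_def by auto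
    then have "lf n R m mod int n = lf n R (m' - 1) mod int n" using red_eq_iff[OF n1] by simp
    then have K4: "Fform n p R (lf n R m) x = Fform n p R (lf n R (m' - 1)) x" by (rule F_cong[OF n1])
    have Qp: "Q \<noteq> 0" using Qpos[OF n1 pr Rs Fneg xpos] unfolding Q_def by simp
    have K3': "rat_of_int (Fform n p R (lf n R (m' - 1)) x) = of_nat p * F' - Q * rat_of_int (x j)"
      unfolding K3m Q_def by (simp add: algebra_simps)
    define XJ where "XJ = rat_of_int (x j)"
    have "- (of_nat p * F' - Q * XJ) / Q - (- of_nat p * F' / Q) = XJ"
      using Qp by (simp add: field_simps)
    then have "X m + 0 - Y m' = rat_of_int (x j)"
      unfolding Xm Ym K4 K3' XJ_def by simp
    then show ?thesis using tot sX sY zB H_def by simp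
  qed
qed

end

theorem mainTheorem5:
  fixes n p :: nat and R :: "nat set" and x :: "nat \<Rightarrow> int"
  assumes "n \<ge> 1" and "prime p" and "R \<subset> {1..n}"
    and "\<forall>i\<in>{1..n}. Fform n p R (int i) x \<le> 0"
    and "\<forall>i\<in>R. x i \<ge> 0"
  shows "\<exists>c :: nat \<Rightarrow> nat \<Rightarrow> rat.
           (\<forall>i\<in>{1..hh n R}. \<forall>k\<in>{1..gg n R i}. c i k \<ge> 0) \<and>
           (\<forall>j\<in>{1..n}. rat_of_int (x j) =
              (\<Sum>i=1..hh n R. \<Sum>k=1..gg n R i. c i k * rat_of_int (lam n p R i k j)))"
proof (intro exI conjI ballI)
  fix i k assume "i \<in> {1..hh n R}" "k \<in> {1..gg n R i}"
  then show "cc n p R x i k \<ge> 0" using cc_nonneg[OF assms] by blast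
next
  fix j assume "j \<in> {1..n}"
  then show "rat_of_int (x j) = (\<Sum>i=1..hh n R. \<Sum>k=1..gg n R i. cc n p R x i k * rat_of_int (lam n p R i k j))"
    using main_eq[OF assms] by blast
qed


end
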